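(* Let $n\ge k\ge 3$ and let $U_1$ be the unicyclic graph on $k$ vertices consisting of a triangle $v_1v_2v_3$ together with $k-3$ further vertices each adjacent only to $v_1$. Regard $U_1$ as a subgraph of $K_n$ and let $\Gamma=(K_n,U_1^-)$. Then, with $u=n-k$, $$\varphi(\Gamma,\lambda)=(\lambda+1)^{n-5}(\lambda-1)\Big(\lambda^4+(6-n)\lambda^3+(16-5n)\lambda^2+(4k-11n+4ku+18)\lambda+28k-31n+12ku+7\Big).$$
   Context: For a subgraph $H$ of $K_n$, $(K_n,H^-)$ denotes the signed complete graph on $n$ vertices whose negative edges are exactly the edges of $H$ (all other edges positive); its adjacency matrix has entry $-1$ for negative edges, $+1$ for positive edges and $0$ on the diagonal. $\varphi(\Gamma,\lambda)=\det(\lambda I-A(\Gamma))$. *)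

theory Defs
  imports "Jordan_Normal_Form.Char_Poly"
begin

text \<open>Vertices of K_n are 0,...,n-1. A subgraph H of K_n is given by a (symmetric)
edge predicate H on vertices. The signed complete graph (K_n, H^-) has adjacency
matrix with 0 on the diagonal, -1 on edges of H, +1 on all other pairs.\<close>

definition signed_complete_adj :: "nat \<Rightarrow> (nat \<Rightarrow> nat \<Rightarrow> bool) \<Rightarrow> int mat" where
  "signed_complete_adj n H =
     mat n n (\<lambda>(i,j). if i = j then 0 else if H i j then -1 else 1)"

text \<open>The unicyclic graph U_1 on vertices 0,...,k-1: triangle v1 v2 v3 = 0 1 2,
and every further vertex 3,...,k-1 adjacent only to v1 = 0.\<close>

definition U1_edge :: "nat \<Rightarrow> nat \<Rightarrow> nat \<Rightarrow> bool" where
  "U1_edge k i j =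
     (i \<noteq> j \<and> i < k \<and> j < k \<and> ((i < 3 \<and> j < 3) \<or> i = 0 \<or> j = 0))"

end

theory Submission
  imports Defs
begin

lemma det_mat_Suc:
  "det (mat (Suc m) (Suc m) f :: 'a :: comm_ring_1 mat) =
   (\<Sum>j<Suc m. f (0,j) * (-1)^j * det (mat m m (\<lambda>(a,b). f (Suc a, if b < j then b else Suc b))))"
proof -
  have "det (mat (Suc m) (Suc m) f) = (\<Sum>j<Suc m. mat (Suc m) (Suc m) f $$ (0,j) * cofactor (mat (Suc m) (Suc m) f) 0 j)"
    by (rule laplace_expansion_row) auto
  also have "\<dots> = (\<Sum>j<Suc m. f (0,j) * (-1)^j * det (mat m m (\<lambda>(a,b). f (Suc a, if b < j then b else Suc b))))"
  proof (rule sum.cong[OF refl])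
    fix j assume j: "j \<in> {..<Suc m}"
    have "mat_delete (mat (Suc m) (Suc m) f) 0 j = mat m m (\<lambda>(a,b). f (Suc a, if b < j then b else Suc b))"
      unfolding mat_delete_def by (rule eq_matI) auto
    then show "mat (Suc m) (Suc m) f $$ (0,j) * cofactor (mat (Suc m) (Suc m) f) 0 j = f (0,j) * (-1)^j * det (mat m m (\<lambda>(a,b). f (Suc a, if b < j then b else Suc b)))"
      using j unfolding cofactor_def by simp
  qed
  finally show ?thesis .
qed

lemma det_mat_0: "det (mat 0 0 f :: 'a :: comm_ring_1 mat) = 1"
  by (simp add: det_def')

lemma sylvester:
  fixes U :: "'a :: idom mat"
  assumes U: "U \<in> carrier_mat n m" and V: "V \<in> carrier_mat m n"
  shows "c^m * det (c \<cdot>\<^sub>m 1\<^sub>m n + U * V) = c^n * det (c \<cdot>\<^sub>m 1\<^sub>m m + V * U)"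
proof -
  define X where "X = four_block_mat (c \<cdot>\<^sub>m 1\<^sub>m n) (-U) V (1\<^sub>m m)"
  define L where "L = four_block_mat (1\<^sub>m n) U (0\<^sub>m m n) (c \<cdot>\<^sub>m 1\<^sub>m m)"
  have X: "X \<in> carrier_mat (n+m) (n+m)" unfolding X_def using U V by auto
  have L: "L \<in> carrier_mat (n+m) (n+m)" unfolding L_def using U V by auto
  have detL: "det L = c^m"
    unfolding L_def by (subst det_four_block_mat_lower_left_zero[of _ n _ m]) (use U in auto)
  have "L * X = four_block_mat (c \<cdot>\<^sub>m 1\<^sub>m n + U * V) (0\<^sub>m n m) (c \<cdot>\<^sub>m V) (c \<cdot>\<^sub>m 1\<^sub>m m)"
    unfolding L_def X_def
    apply (subst mult_four_block_mat[of _ n n _ m _ m])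
    using U V apply (auto)
    done
  then have "det L * det X = c^m * det (c \<cdot>\<^sub>m 1\<^sub>m n + U * V)"
    apply (subst det_mult[OF L X, symmetric])
    apply simp
    apply (subst det_four_block_mat_upper_right_zero[of _ n _ m])
    using U V by auto
  have e1: "c \<cdot>\<^sub>m 1\<^sub>m n * U + - (U * (c \<cdot>\<^sub>m 1\<^sub>m m)) = 0\<^sub>m n m"
    using U by (simp add: mult_smult_assoc_mat[of _ n n _ m] mult_smult_distrib[of _ n m _ m], intro eq_matI, auto)
  have e2: "V * U + c \<cdot>\<^sub>m 1\<^sub>m m = c \<cdot>\<^sub>m 1\<^sub>m m + V * U"
    using U V by (intro comm_add_mat[of _ m m]) auto
  have "X * L = four_block_mat (c \<cdot>\<^sub>m 1\<^sub>m n) (0\<^sub>m n m) V (c \<cdot>\<^sub>m 1\<^sub>m m + V * U)"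
    unfolding L_def X_def
    apply (subst mult_four_block_mat[of _ n n _ m _ m])
    using U V apply (auto)
    using e1 e2 by simp
  then have "det X * det L = c^n * det (c \<cdot>\<^sub>m 1\<^sub>m m + V * U)"
    apply (subst det_mult[OF X L, symmetric])
    apply simp
    apply (subst det_four_block_mat_upper_right_zero[of _ n _ m])
    using U V by auto
  then show ?thesis using `det L * det X = _` by (simp add: mult.commute)
qed

definition uf :: "nat \<Rightarrow> nat \<Rightarrow> nat \<Rightarrow> int" where
  "uf k j i = (if j=0 then 1 else if j=1 then (if i=0 then 1 else 0)
     else if j=2 then (if 1\<le>i \<and> i<k then 1 else 0)
     else if j=3 then (if i=1 then 1 else 0) else (if i=2 then 1 else 0))"
definition vf :: "nat \<Rightarrow> nat \<Rightarrow> nat \<Rightarrow> int" where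
  "vf k j i = (if j=0 then -1 else if j=1 then (if 1\<le>i \<and> i<k then 2 else 0)
     else if j=2 then (if i=0 then 2 else 0)
     else if j=3 then (if i=2 then 2 else 0) else (if i=1 then 2 else 0))"

lemma sum5: "(\<Sum>l::nat = 0..<5. f l) = f 0 + f 1 + f 2 + f 3 + (f 4 :: 'a :: comm_monoid_add)"
  by (simp add: eval_nat_numeral atLeast0LessThan lessThan_Suc ac_simps)

lemma step1:
  fixes x :: int
  shows "poly (char_poly (signed_complete_adj n H)) x =
    det (mat n n (\<lambda>(i,j). (if i = j then x else 0) - signed_complete_adj n H $$ (i,j)))"
  unfolding char_poly_def
  by (rule poly_det_cong[of _ n]) (auto simp: char_poly_matrix_def signed_complete_adj_def)

lemma step2:
  fixes x :: int
  assumes "3 \<le> k" "k \<le> n"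
  shows "mat n n (\<lambda>(i,j). (if i = j then x else 0) - signed_complete_adj n (U1_edge k) $$ (i,j))
     = (x+1) \<cdot>\<^sub>m 1\<^sub>m n + mat n 5 (\<lambda>(i,j). uf k j i) * mat 5 n (\<lambda>(j,i). vf k j i)"
  using assms
  by (intro eq_matI) (auto simp: scalar_prod_def sum5 uf_def vf_def signed_complete_adj_def U1_edge_def)


definition sm :: "nat \<Rightarrow> nat \<Rightarrow> int list list" where
  "sm n k = [[- int n, -1, 1 - int k, -1, -1],
             [2 * int k - 2, 0, 2 * int k - 2, 2, 2],
             [2, 2, 0, 0, 0],
             [2, 0, 2, 0, 2],
             [2, 0, 2, 2, 0]]"

lemma mult_if_if: "(if P then a else 0) * (if Q then b else 0) = (if P \<and> Q then a * b else (0::int))"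
  by auto

lemma sum_range: assumes "1 \<le> k" "k \<le> n"
  shows "(\<Sum>i = 0..<n. (if Suc 0 \<le> i \<and> i < k then c else 0)) = c * (int k - 1)"
proof -
  have "(\<Sum>i = 0..<n. (if Suc 0 \<le> i \<and> i < k then c else 0)) = (\<Sum>i \<in> {1..<k}. c)"
    using assms by (intro sum.mono_neutral_cong_right) auto
  then show ?thesis using assms by (simp add: of_nat_diff)
qed

lemma less5: "(a::nat) < 5 \<Longrightarrow> a = 0 \<or> a = 1 \<or> a = 2 \<or> a = 3 \<or> a = 4" by auto

lemma sum_at1: "(\<Sum>i::nat = 0..<n. if P i \<and> i = a then c else 0) = (if P a \<and> a < n then c else (0::int))"
proof -
  have "(\<Sum>i = 0..<n. if P i \<and> i = a then c else 0) = (\<Sum>i = 0..<n. if i = a then (if P a then c else 0) else 0)"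
    by (rule sum.cong) auto
  also have "\<dots> = (if a < n then (if P a then c else 0) else 0)" by simp
  finally show ?thesis by simp
qed

lemma sum_at2: "(\<Sum>i::nat = 0..<n. if P i \<and> Q i \<and> i = a then c else 0) = (if P a \<and> Q a \<and> a < n then c else (0::int))"
  using sum_at1[of "\<lambda>i. P i \<and> Q i"] by simp

lemma step3:
  assumes "3 \<le> k" "k \<le> n"
  shows "mat 5 n (\<lambda>(j,i). vf k j i) * mat n 5 (\<lambda>(i,j). uf k j i) = mat 5 5 (\<lambda>(a,b). sm n k ! a ! b)"
proof (rule eq_matI)
  fix a b assume a: "a < dim_row (mat 5 5 (\<lambda>(a,b). sm n k ! a ! b))" and b: "b < dim_col (mat 5 5 (\<lambda>(a,b). sm n k ! a ! b))"
  have a5: "a < 5" and b5: "b < 5" using a b by auto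
  have n: "0 < n" "1 < n" "2 < n" "1 < k" "2 < k" using assms by auto
  have "(\<Sum>i = 0..<n. vf k a i * uf k b i) = sm n k ! a ! b"
    using less5[OF a5] less5[OF b5] n
    by (auto simp: vf_def uf_def sm_def mult_if_if sum_range assms sum_at1 sum_at2 sum_negf cong: conj_cong)
  then show "(mat 5 n (\<lambda>(j,i). vf k j i) * mat n 5 (\<lambda>(i,j). uf k j i)) $$ (a, b) = mat 5 5 (\<lambda>(a,b). sm n k ! a ! b) $$ (a, b)"
    using a5 b5 by (simp add: scalar_prod_def)
qed auto


lemma det3: "det (mat 3 3 f :: 'a :: comm_ring_1 mat) =
  f(0,0)*f(1,1)*f(2,2) - f(0,0)*f(1,2)*f(2,1) - f(0,1)*f(1,0)*f(2,2)
  + f(0,1)*f(1,2)*f(2,0) + f(0,2)*f(1,0)*f(2,1) - f(0,2)*f(1,1)*f(2,0)"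
  by (simp add: numeral_eq_Suc det_mat_Suc det_mat_0 lessThan_Suc algebra_simps)


lemma sumlt4: "(\<Sum>l<(4::nat). f l) = f 0 + f 1 + f 2 + (f 3 :: 'a :: comm_monoid_add)"
  by (simp add: eval_nat_numeral lessThan_Suc ac_simps)
lemma sumlt5: "(\<Sum>l<(5::nat). f l) = f 0 + f 1 + f 2 + f 3 + (f 4 :: 'a :: comm_monoid_add)"
  by (simp add: eval_nat_numeral lessThan_Suc ac_simps)

lemma det4: "det (mat 4 4 f :: 'a :: comm_ring_1 mat) =
   (\<Sum>j<4. f (0,j) * (-1)^j * det (mat 3 3 (\<lambda>(a,b). f (Suc a, if b < j then b else Suc b))))"
  using det_mat_Suc[of 3 f] by (simp add: numeral_eq_Suc)
lemma det5: "det (mat 5 5 f :: 'a :: comm_ring_1 mat) =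
   (\<Sum>j<5. f (0,j) * (-1)^j * det (mat 4 4 (\<lambda>(a,b). f (Suc a, if b < j then b else Suc b))))"
  using det_mat_Suc[of 4 f] by (simp add: numeral_eq_Suc)

lemma step4:
  fixes x :: int
  shows "det ((x+1) \<cdot>\<^sub>m 1\<^sub>m 5 + mat 5 5 (\<lambda>(a,b). sm n k ! a ! b)) =
    (x - 1) * (x^4 + (6 - int n) * x^3 + (16 - 5 * int n) * x^2
      + (4 * int k - 11 * int n + 4 * int k * (int n - int k) + 18) * x
      + 28 * int k - 31 * int n + 12 * int k * (int n - int k) + 7)"
proof -
  have "(x+1) \<cdot>\<^sub>m 1\<^sub>m 5 + mat 5 5 (\<lambda>(a,b). sm n k ! a ! b) =
     mat 5 5 (\<lambda>(a,b). (if a = b then x + 1 else 0) + sm n k ! a ! b)"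
    by (rule eq_matI) auto
  also have "det \<dots> = (x - 1) * (x^4 + (6 - int n) * x^3 + (16 - 5 * int n) * x^2
      + (4 * int k - 11 * int n + 4 * int k * (int n - int k) + 18) * x
      + 28 * int k - 31 * int n + 12 * int k * (int n - int k) + 7)"
    apply (simp only: det5 det4 det3 sumlt4 sumlt5)
    apply (simp add: sm_def)
    apply (simp add: algebra_simps power2_eq_square power3_eq_cube eval_nat_numeral)
    done
  finally show ?thesis .
qed


theorem lemma3p5:
  fixes n k :: nat
  assumes "3 \<le> k" and "k \<le> n"
  defines "u \<equiv> int n - int k"
  shows "[:1,1:] ^ 5 * char_poly (signed_complete_adj n (U1_edge k))
       = [:1,1:] ^ n * [:-1,1:] *
         [: 28 * int k - 31 * int n + 12 * int k * u + 7,
            4 * int k - 11 * int n + 4 * int k * u + 18,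
            16 - 5 * int n, 6 - int n, 1 :]"
proof -
  define U where "U = mat n 5 (\<lambda>(i,j). uf k j i)"
  define V where "V = mat 5 n (\<lambda>(j,i). vf k j i)"
  have UC: "U \<in> carrier_mat n 5" and VC: "V \<in> carrier_mat 5 n" unfolding U_def V_def by auto
  have "poly ([:1,1:] ^ 5 * char_poly (signed_complete_adj n (U1_edge k))) x =
        poly ([:1,1:] ^ n * [:-1,1:] *
         [: 28 * int k - 31 * int n + 12 * int k * u + 7,
            4 * int k - 11 * int n + 4 * int k * u + 18,
            16 - 5 * int n, 6 - int n, 1 :]) x" for x
  proof -
    have "poly ([:1,1:] ^ 5 * char_poly (signed_complete_adj n (U1_edge k))) x
       = (x+1)^5 * det ((x+1) \<cdot>\<^sub>m 1\<^sub>m n + U * V)"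
      by (simp add: step1 step2[OF assms(1,2)] U_def V_def add.commute)
    also have "\<dots> = (x+1)^n * det ((x+1) \<cdot>\<^sub>m 1\<^sub>m 5 + V * U)"
      by (rule sylvester[OF UC VC])
    also have "\<dots> = (x+1)^n * ((x - 1) * (x^4 + (6 - int n) * x^3 + (16 - 5 * int n) * x^2
      + (4 * int k - 11 * int n + 4 * int k * (int n - int k) + 18) * x
      + 28 * int k - 31 * int n + 12 * int k * (int n - int k) + 7))"
      unfolding U_def V_def step3[OF assms(1,2)] step4 ..
    also have "\<dots> = poly ([:1,1:] ^ n * [:-1,1:] *
         [: 28 * int k - 31 * int n + 12 * int k * u + 7,
            4 * int k - 11 * int n + 4 * int k * u + 18,
            16 - 5 * int n, 6 - int n, 1 :]) x"
      by (simp add: u_def algebra_simps power2_eq_square power3_eq_cube eval_nat_numeral)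
    finally show ?thesis .
  qed
  then show ?thesis using poly_eq_poly_eq_iff by blast
qed

end
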